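(* Let $A,B\in\mathrm{End}(\mathbb{R}^2)$ and consider the function $$F_{A,B}=\psi_B-\Big(\frac{\partial\psi_A}{\partial\theta}\Big)^2+\Big(\frac{\partial\psi_A}{\partial\phi}\Big)^2$$ on $\mathbb{T}$. (1) If $A\neq0$ is non-special, then for all $B$, $F_{A,B}$ is non-vanishing over an open dense subset of $Z_A$. (2) If $A\neq0$ is special and $B\neq0$ is not colinear with $A$, then $F_{A,B}$ is non-vanishing over an open dense subset of $Z_A$.
   Context: $\mathbb{T}=\mathbb{S}^1\times\mathbb{S}^1$ with coordinates $(\theta,\phi)$. For $A\in\mathrm{End}(\mathbb{R}^2)$, $\psi_A(\theta,\phi)=(\cos\theta,\sin\theta)A(\cos\phi,\sin\phi)^t$ and $Z_A=\psi_A^{-1}(\{0\})\subset\mathbb{T}$. A non-zero matrix $A$ is called special if it is a non-zero scalar multiple of an orthogonal matrix, and non-special otherwise. *)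

theory Defs
  imports "HOL-Analysis.Analysis"
begin

text \<open>The torus T = S^1 x S^1 is represented by its universal cover R x R with
  coordinates (theta, phi); all functions below are 2pi-periodic in both variables.\<close>

definition psi :: "real^2^2 \<Rightarrow> real \<times> real \<Rightarrow> real" where
  "psi A = (\<lambda>(\<theta>, \<phi>). (vector [cos \<theta>, sin \<theta>] :: real^2) \<bullet> (A *v (vector [cos \<phi>, sin \<phi>] :: real^2)))"

definition zero_set :: "real^2^2 \<Rightarrow> (real \<times> real) set" where
  "zero_set A = {p. psi A p = 0}"

definition d_theta :: "(real \<times> real \<Rightarrow> real) \<Rightarrow> real \<times> real \<Rightarrow> real" where
  "d_theta f = (\<lambda>(\<theta>, \<phi>). deriv (\<lambda>t. f (t, \<phi>)) \<theta>)"

definition d_phi :: "(real \<times> real \<Rightarrow> real) \<Rightarrow> real \<times> real \<Rightarrow> real" where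
  "d_phi f = (\<lambda>(\<theta>, \<phi>). deriv (\<lambda>t. f (\<theta>, t)) \<phi>)"

definition F_AB :: "real^2^2 \<Rightarrow> real^2^2 \<Rightarrow> real \<times> real \<Rightarrow> real" where
  "F_AB A B = (\<lambda>p. psi B p - (d_theta (psi A) p)\<^sup>2 + (d_phi (psi A) p)\<^sup>2)"

definition special :: "real^2^2 \<Rightarrow> bool" where
  "special A \<longleftrightarrow> A \<noteq> 0 \<and> (\<exists>c Q. c \<noteq> 0 \<and> orthogonal_matrix Q \<and> A = c *\<^sub>R Q)"

definition colinear_mat :: "real^2^2 \<Rightarrow> real^2^2 \<Rightarrow> bool" where
  "colinear_mat A B \<longleftrightarrow> (\<exists>c. B = c *\<^sub>R A) \<or> (\<exists>c. A = c *\<^sub>R B)"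

definition nonvanishing_open_dense :: "(real \<times> real \<Rightarrow> real) \<Rightarrow> (real \<times> real) set \<Rightarrow> bool" where
  "nonvanishing_open_dense f S \<longleftrightarrow>
     (\<exists>U. openin (top_of_set S) U \<and> S \<subseteq> closure U \<and> (\<forall>p\<in>U. f p \<noteq> 0))"

end

theory Submission
  imports Defs "HOL-Complex_Analysis.Conformal_Mappings"
begin

lemma psi_eq: "psi A (t, p) = A$1$1 * cos t * cos p + A$1$2 * cos t * sin p + A$2$1 * sin t * cos p + A$2$2 * sin t * sin p"
  by (simp add: psi_def inner_vec_def matrix_vector_mult_def sum_2 algebra_simps)

lemma dtheta_eq: "d_theta (psi A) (t, p) = - A$1$1 * sin t * cos p - A$1$2 * sin t * sin p + A$2$1 * cos t * cos p + A$2$2 * cos t * sin p"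
proof -
  have "((\<lambda>t. psi A (t, p)) has_real_derivative (- A$1$1 * sin t * cos p - A$1$2 * sin t * sin p + A$2$1 * cos t * cos p + A$2$2 * cos t * sin p)) (at t)"
    unfolding psi_eq by (auto intro!: derivative_eq_intros)
  then show ?thesis unfolding d_theta_def by (simp add: DERIV_imp_deriv)
qed

lemma dphi_eq: "d_phi (psi A) (t, p) = - A$1$1 * cos t * sin p + A$1$2 * cos t * cos p - A$2$1 * sin t * sin p + A$2$2 * sin t * cos p"
proof -
  have "((\<lambda>p. psi A (t, p)) has_real_derivative (- A$1$1 * cos t * sin p + A$1$2 * cos t * cos p - A$2$1 * sin t * sin p + A$2$2 * sin t * cos p)) (at p)"
    unfolding psi_eq by (auto intro!: derivative_eq_intros)
  then show ?thesis unfolding d_phi_def by (simp add: DERIV_imp_deriv)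
qed

lemma ident:
  fixes f :: "complex \<Rightarrow> complex"
  assumes hol: "f holomorphic_on UNIV" and d: "\<delta> > 0"
    and z: "\<And>t. \<bar>t - xc\<bar> < \<delta> \<Longrightarrow> f (of_real t) = 0"
  shows "f w = 0"
proof (rule analytic_continuation[OF hol open_UNIV connected_UNIV subset_UNIV UNIV_I])
  show "of_real xc islimpt (of_real ` {t. \<bar>t - xc\<bar> < \<delta>} :: complex set)"
    unfolding islimpt_approachable
  proof (intro allI impI)
    fix e :: real assume e: "e > 0"
    let ?t = "xc + min e \<delta> / 2"
    have "of_real ?t \<in> (of_real ` {t. \<bar>t - xc\<bar> < \<delta>} :: complex set)"
      by (rule image_eqI[of _ _ ?t]) (use d e in auto)
    moreover have "(of_real ?t :: complex) \<noteq> of_real xc" using d e by simp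
    moreover have "dist (of_real ?t :: complex) (of_real xc) < e"
      using d e by (simp add: dist_norm flip: of_real_diff)
    ultimately show "\<exists>x'\<in>(of_real ` {t. \<bar>t - xc\<bar> < \<delta>} :: complex set). x' \<noteq> of_real xc \<and> dist x' (of_real xc) < e"
      by blast
  qed
  show "\<And>z. z \<in> (of_real ` {t. \<bar>t - xc\<bar> < \<delta>} :: complex set) \<Longrightarrow> f z = 0" using z by auto
qed auto

lemma cos_sin_surj:
  fixes x y :: complex
  assumes "x^2 + y^2 = 1"
  shows "\<exists>z. cos z = x \<and> sin z = y"
proof -
  define w where "w = x + \<i> * y"
  have w1: "w * (x - \<i> * y) = 1" using assms by (simp add: w_def algebra_simps power2_eq_square)
  then have w0: "w \<noteq> 0" by auto
  have winv: "inverse w = x - \<i> * y" using w1 by (rule inverse_unique)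
  define z where "z = - \<i> * Ln w"
  have e1: "exp (\<i> * z) = w" using w0 by (simp add: z_def)
  have e2: "exp (- (\<i> * z)) = x - \<i> * y"
    using w0 winv by (simp add: z_def exp_minus)
  have "cos z = x" unfolding cos_exp_eq e1 e2 by (simp add: w_def)
  moreover have "sin z = y" unfolding sin_exp_eq e1 e2 by (simp add: w_def field_simps)
  ultimately show ?thesis by blast
qed

lemma cplx_zero:
  fixes m11 m12 m22 :: real
  assumes m11: "m11 \<noteq> 0" and ns: "\<not> (m11 = m22 \<and> m12 = 0)"
  shows "\<exists>z::complex. of_real m11 * cos z ^ 2 + 2 * of_real m12 * cos z * sin z + of_real m22 * sin z ^ 2 = 0"
proof -
  define D where "D = csqrt (of_real (m12^2 - m11 * m22))"
  define x1 where "x1 = (- of_real m12 + D) / of_real m11"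
  have D2: "D^2 = of_real (m12^2 - m11 * m22)" by (simp add: D_def)
  have q: "of_real m11 * x1^2 + 2 * of_real m12 * x1 + of_real m22 = 0"
  proof -
    have "(of_real m11 * x1 + of_real m12)^2 = D^2" using m11 by (simp add: x1_def)
    then have "of_real m11 * (of_real m11 * x1^2 + 2 * of_real m12 * x1 + of_real m22) = 0"
      unfolding D2 by (simp add: algebra_simps power2_eq_square)
    then show ?thesis using m11 by simp
  qed
  have nz: "x1^2 + 1 \<noteq> 0"
  proof
    assume h: "x1^2 + 1 = 0"
    then have "2 * of_real m12 * x1 = of_real m11 - of_real m22" using q
      by (metis add.commute add_diff_cancel_left' add_diff_eq diff_add_cancel mult.commute mult_minus1_right
          neg_eq_iff_add_eq_0 diff_0_right)
    show False
    proof (cases "m12 = 0")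
      case True
      then show False using \<open>2 * of_real m12 * x1 = of_real m11 - of_real m22\<close> ns by simp
    next
      case False
      then have "x1 = of_real ((m11 - m22) / (2 * m12))"
        using \<open>2 * of_real m12 * x1 = of_real m11 - of_real m22\<close> by (simp add: field_simps)
      then have "of_real (((m11 - m22) / (2 * m12))^2 + 1) = (0::complex)" using h by simp
      then have "((m11 - m22) / (2 * m12))^2 + 1 = 0" by (simp only: of_real_eq_0_iff)
      moreover have "((m11 - m22) / (2 * m12))^2 \<ge> 0" by simp
      ultimately show False by linarith
    qed
  qed
  define k where "k = csqrt (x1^2 + 1)"
  have k2: "k^2 = x1^2 + 1" by (simp add: k_def)
  then have k0: "k \<noteq> 0" using nz by auto
  have "(x1/k)^2 + (1/k)^2 = (x1^2+1)/k^2" by (simp add: power_divide add_divide_distrib)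
  also have "\<dots> = 1" using k2 nz by simp
  finally have "(x1/k)^2 + (1/k)^2 = 1" .
  then obtain z where z: "cos z = x1/k" "sin z = 1/k" using cos_sin_surj by blast
  have "of_real m11 * cos z ^ 2 + 2 * of_real m12 * cos z * sin z + of_real m22 * sin z ^ 2
        = (of_real m11 * x1^2 + 2 * of_real m12 * x1 + of_real m22) / k^2"
    unfolding z using k0 by (simp add: field_simps power2_eq_square)
  also have "\<dots> = 0" using q by simp
  finally show ?thesis by blast
qed

lemma lift:
  fixes X Y :: "real \<Rightarrow> real"
  assumes cX: "continuous (at t0) X" and cY: "continuous (at t0) Y"
    and n: "\<And>t. X t ^ 2 + Y t ^ 2 = 1" and xc: "X t0 = cos p0" and y0: "Y t0 = sin p0"
  shows "\<exists>ph. continuous (at t0) ph \<and> ph t0 = p0 \<and> (\<forall>t. cos (ph t) = X t \<and> sin (ph t) = Y t)"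
proof -
  define w where "w t = Complex (X t) (Y t)" for t
  have nw: "norm (w t) = 1" for t using n[of t] by (simp add: w_def cmod_def)
  define ph where "ph t = p0 + Arg (w t * cis (- p0))" for t
  have cis: "cis (ph t) = w t" for t
  proof -
    have nz: "w t * cis (- p0) \<noteq> 0" using nw[of t] by auto
    have "cis (ph t) = cis p0 * cis (Arg (w t * cis (- p0)))" by (simp add: ph_def cis_mult)
    also have "\<dots> = cis p0 * sgn (w t * cis (- p0))" using nz by (simp add: cis_Arg)
    also have "\<dots> = cis p0 * (w t * cis (- p0))" using nw[of t] by (simp add: sgn_div_norm norm_mult)
    also have "\<dots> = w t" by (simp add: cis_mult mult.commute mult.left_commute)
    finally show ?thesis .
  qed
  have w0: "w t0 * cis (- p0) = 1"
    by (simp add: w_def xc y0 cis.ctr[symmetric] cis_mult)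
  have "continuous (at t0) (\<lambda>t. w t * cis (- p0))"
  proof -
    have "w = (\<lambda>t. of_real (X t) + \<i> * of_real (Y t))" by (auto simp: w_def fun_eq_iff complex_eq_iff)
    then show ?thesis using cX cY by (auto intro!: continuous_intros)
  qed
  moreover have "continuous (at (w t0 * cis (- p0))) Arg"
    unfolding w0 by (rule continuous_at_Arg) (simp add: complex_nonpos_Reals_iff)
  ultimately have "continuous (at t0) (\<lambda>t. Arg (w t * cis (- p0)))"
    using continuous_at_compose[unfolded o_def] by blast
  then have "continuous (at t0) ph" unfolding ph_def by (intro continuous_intros)
  moreover have "ph t0 = p0" unfolding ph_def w0 by simp
  moreover have "cos (ph t) = X t \<and> sin (ph t) = Y t" for t
    using cis[of t] by (simp add: w_def complex_eq_iff)
  ultimately show ?thesis by blast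
qed

lemma real_ident:
  fixes g :: "real \<Rightarrow> real" and f :: "complex \<Rightarrow> complex"
  assumes hol: "f holomorphic_on UNIV" and fg: "\<And>t. f (of_real t) = of_real (g t)"
    and d: "\<delta> > 0" and z: "\<And>t. \<bar>t - x0\<bar> < \<delta> \<Longrightarrow> g t = 0"
  shows "g t = 0"
proof -
  have "f (of_real t) = 0"
    by (rule ident[OF hol d, where xc=x0]) (simp add: fg z)
  then show ?thesis using fg[of t] by simp
qed

lemma line_lemma:
  fixes \<alpha> \<beta> \<gamma> k1 k2 x0 \<delta> :: real
  assumes d: "\<delta> > 0"
    and z: "\<And>t. \<bar>t - x0\<bar> < \<delta> \<Longrightarrow> \<alpha> * cos t + \<beta> * sin t + \<gamma> * (k1 * cos t + k2 * sin t)^2 = 0"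
  shows "\<gamma> = 0 \<or> (k1 = 0 \<and> k2 = 0)"
proof -
  have all: "\<alpha> * cos t + \<beta> * sin t + \<gamma> * (k1 * cos t + k2 * sin t)^2 = 0" for t
  proof (rule real_ident[OF _ _ d z])
    show "(\<lambda>z. of_real \<alpha> * cos z + of_real \<beta> * sin z + of_real \<gamma> * (of_real k1 * cos z + of_real k2 * sin z)^2) holomorphic_on UNIV"
      by (intro holomorphic_intros)
  qed (simp add: cos_of_real sin_of_real)
  have "\<gamma> * (k1 * cos t + k2 * sin t)^2 = 0" for t
    using all[of t] all[of "t + pi"] by (simp add: power2_eq_square algebra_simps)
  from this[of 0] this[of "pi/2"] show ?thesis by auto
qed

definition sP :: "real^2^2 \<Rightarrow> 'a::{real_normed_field,banach} \<Rightarrow> 'a" where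
  "sP A z = of_real (A$1$1) * cos z + of_real (A$2$1) * sin z"
definition sQ :: "real^2^2 \<Rightarrow> 'a::{real_normed_field,banach} \<Rightarrow> 'a" where
  "sQ A z = of_real (A$1$2) * cos z + of_real (A$2$2) * sin z"
definition NN :: "real^2^2 \<Rightarrow> real^2^2 \<Rightarrow> 'a::{real_normed_field,banach} \<Rightarrow> 'a" where
  "NN A B z = sP A z * sQ B z - sQ A z * sP B z"
definition ss :: "real^2^2 \<Rightarrow> 'a::{real_normed_field,banach} \<Rightarrow> 'a" where
  "ss A z = sP A z ^ 2 + sQ A z ^ 2"
definition dt :: "real^2^2 \<Rightarrow> real" where
  "dt A = A$1$1 * A$2$2 - A$1$2 * A$2$1"
definition GG :: "real^2^2 \<Rightarrow> real^2^2 \<Rightarrow> 'a::{real_normed_field,banach} \<Rightarrow> 'a" where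
  "GG A B z = ss A z * NN A B z ^ 2 - (ss A z ^ 2 - of_real (dt A ^ 2)) ^ 2"

lemma GG_hol: "(GG A B :: complex \<Rightarrow> complex) holomorphic_on UNIV"
  unfolding GG_def ss_def NN_def sP_def sQ_def by (intro holomorphic_intros)

lemma GG_of_real: "GG A B (of_real t :: complex) = of_real (GG A B t)"
  unfolding GG_def ss_def NN_def sP_def sQ_def by (simp add: cos_of_real sin_of_real)

lemma real_of_real_id: "(of_real x :: real) = x" by simp

lemma sP_real: "sP A (t::real) = A$1$1 * cos t + A$2$1 * sin t" by (simp add: sP_def)
lemma sQ_real: "sQ A (t::real) = A$1$2 * cos t + A$2$2 * sin t" by (simp add: sQ_def)

lemma alg_inv:
  fixes a b c e a' b' c' e' ct st X Y r \<sigma> :: real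
  assumes cs: "ct^2 + st^2 = 1" and r: "r^2 = (a* ct + c* st)^2 + (b* ct + e* st)^2"
    and sg: "\<sigma>^2 = 1"
    and rX: "r * X = - \<sigma> * (b* ct + e* st)" and rY: "r * Y = \<sigma> * (a* ct + c* st)"
    and F: "(a' * ct * X + b' * ct * Y + c' * st * X + e' * st * Y)
            - (- a * st * X - b * st * Y + c * ct * X + e * ct * Y)^2
            + (- a * ct * Y + b * ct * X - c * st * Y + e * st * X)^2 = 0"
  shows "((a* ct + c* st)^2 + (b* ct + e* st)^2) * ((a* ct + c* st) * (b'* ct + e'* st) - (b* ct + e* st) * (a'* ct + c'* st))^2
       - (((a* ct + c* st)^2 + (b* ct + e* st)^2)^2 - (a*e - b*c)^2)^2 = 0"
proof -
  define P where "P = a* ct + c* st"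
  define Q where "Q = b* ct + e* st"
  define N where "N = P * (b'* ct + e'* st) - Q * (a'* ct + c'* st)"
  define d where "d = a*e - b*c"
  have rX': "r * X = - \<sigma> * Q" using rX by (simp add: Q_def)
  have rY': "r * Y = \<sigma> * P" using rY by (simp add: P_def)
  have h1: "r * (a' * ct * X + b' * ct * Y + c' * st * X + e' * st * Y) = \<sigma> * N"
    unfolding N_def using rX' rY' by algebra
  have h2: "r * (- a * st * X - b * st * Y + c * ct * X + e * ct * Y) = \<sigma> * d"
    unfolding d_def using rX' rY' cs unfolding P_def Q_def by algebra
  have h3: "r * (- a * ct * Y + b * ct * X - c * st * Y + e * st * X) = - \<sigma> * r^2"
    using rX' rY' r unfolding P_def Q_def by algebra
  have "r^2 * ((a' * ct * X + b' * ct * Y + c' * st * X + e' * st * Y)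
            - (- a * st * X - b * st * Y + c * ct * X + e * ct * Y)^2
            + (- a * ct * Y + b * ct * X - c * st * Y + e * st * X)^2) = \<sigma> * N * r - d^2 + r^4"
    using h1 h2 h3 sg by algebra
  then have "\<sigma> * N * r = d^2 - r^4" using F by simp
  then have "(\<sigma> * N * r)^2 = (d^2 - r^4)^2" by simp
  then have "r^2 * N^2 - ((r^2)^2 - d^2)^2 = 0" using sg by algebra
  then show ?thesis unfolding r[folded P_def Q_def] N_def d_def P_def Q_def .
qed

lemma mat2_eq: "(A::real^2^2) = B \<longleftrightarrow> A$1$1 = B$1$1 \<and> A$1$2 = B$1$2 \<and> A$2$1 = B$2$1 \<and> A$2$2 = B$2$2"
  unfolding vec_eq_iff forall_2 by blast
lemma mat2_nz: "(A::real^2^2) \<noteq> 0 \<longleftrightarrow> A$1$1 \<noteq> 0 \<or> A$1$2 \<noteq> 0 \<or> A$2$1 \<noteq> 0 \<or> A$2$2 \<noteq> 0"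
  unfolding mat2_eq by simp

lemma special_props:
  assumes "special A"
  shows "A$1$1^2 + A$1$2^2 = A$2$1^2 + A$2$2^2 \<and> A$1$1 * A$2$1 + A$1$2 * A$2$2 = 0
       \<and> dt A ^ 2 = (A$1$1^2 + A$1$2^2)^2 \<and> dt A \<noteq> 0"
proof -
  obtain r Q where r: "r \<noteq> 0" and Q: "orthogonal_matrix Q" and A: "A = r *\<^sub>R Q"
    using assms unfolding special_def by blast
  have "Q ** transpose Q = mat 1" using Q unfolding orthogonal_matrix_def by blast
  then have e: "(Q ** transpose Q)$1$1 = 1" "(Q ** transpose Q)$2$2 = 1" "(Q ** transpose Q)$1$2 = 0"
    by (auto simp: mat_def)
  then have q1: "Q$1$1^2 + Q$1$2^2 = 1" and q2: "Q$2$1^2 + Q$2$2^2 = 1" and q3: "Q$1$1 * Q$2$1 + Q$1$2 * Q$2$2 = 0"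
    by (auto simp: matrix_matrix_mult_def sum_2 transpose_def power2_eq_square)
  have ent: "A$1$1 = r * Q$1$1" "A$1$2 = r * Q$1$2" "A$2$1 = r * Q$2$1" "A$2$2 = r * Q$2$2"
    using A by auto
  have L: "(Q$1$1 * Q$2$2 - Q$1$2 * Q$2$1)^2 = 1"
  proof -
    have "(Q$1$1 * Q$2$2 - Q$1$2 * Q$2$1)^2 + (Q$1$1 * Q$2$1 + Q$1$2 * Q$2$2)^2
          = (Q$1$1^2 + Q$1$2^2) * (Q$2$1^2 + Q$2$2^2)" by algebra
    then show ?thesis using q1 q2 q3 by simp
  qed
  have m1: "A$1$1^2 + A$1$2^2 = r^2" using q1 unfolding ent by algebra
  have m2: "A$2$1^2 + A$2$2^2 = r^2" using q2 unfolding ent by algebra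
  have m3: "A$1$1 * A$2$1 + A$1$2 * A$2$2 = 0" using q3 unfolding ent by algebra
  have d: "dt A ^ 2 = (r^2)^2" using L unfolding dt_def ent by algebra
  show ?thesis using m1 m2 m3 d r by auto
qed


lemma nonspecial:
  assumes A0: "A \<noteq> 0" and m: "A$1$1^2 + A$1$2^2 = A$2$1^2 + A$2$2^2" "A$1$1 * A$2$1 + A$1$2 * A$2$2 = 0"
  shows "special A"
proof -
  define a where "a = A$1$1"
  define b where "b = A$1$2"
  define c where "c = A$2$1"
  define e where "e = A$2$2"
  define l where "l = a^2 + b^2"
  have m1: "c^2 + e^2 = l" and m3: "a * c + b * e = 0" using m by (auto simp: a_def b_def c_def e_def l_def)
  have l0: "l > 0"
  proof -
    have "l \<ge> 0" unfolding l_def by simp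
    moreover have "l \<noteq> 0"
    proof
      assume "l = 0"
      then have "a = 0" "b = 0" unfolding l_def by (auto simp: add_nonneg_eq_0_iff)
      moreover have "c = 0" "e = 0" using m1 \<open>l = 0\<close> by (auto simp: add_nonneg_eq_0_iff)
      ultimately show False using A0 by (auto simp: mat2_nz a_def b_def c_def e_def)
    qed
    ultimately show ?thesis by simp
  qed
  have "l * (c^2 - b^2) = (a*c - b*e)*(a*c+b*e) + b^2*((c^2+e^2) - l)" unfolding l_def by (simp add: algebra_simps power2_eq_square)
  then have "l * (c^2 - b^2) = 0" using m1 m3 by simp
  then have cb: "c^2 = b^2" using l0 by simp
  have n1: "a^2 + c^2 = l" using cb unfolding l_def by simp
  have n2: "b^2 + e^2 = l" using cb m1 by simp
  have "(a * b + c * e)^2 = (a*c+b*e)^2 + (c^2-b^2)*(e^2-a^2)" by (simp add: algebra_simps power2_eq_square)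
  then have "(a * b + c * e)^2 = 0" using cb m3 by simp
  then have n3: "a * b + c * e = 0" by simp
  define k where "k = sqrt l"
  have k0: "k > 0" using l0 by (simp add: k_def)
  have kk: "k * k = l" using l0 by (simp add: k_def)
  define Q where "Q = (1 / k) *\<^sub>R A"
  have QA: "Q$i$j = A$i$j / k" for i j by (simp add: Q_def)
  have TQ: "(transpose Q ** Q)$i$j = (A$1$i * A$1$j + A$2$i * A$2$j) / l" for i j
  proof -
    have "(transpose Q ** Q)$i$j = (A$1$i / k) * (A$1$j / k) + (A$2$i / k) * (A$2$j / k)"
      by (simp add: matrix_matrix_mult_def sum_2 transpose_def QA)
    also have "\<dots> = (A$1$i * A$1$j + A$2$i * A$2$j) / (k * k)" by (simp add: add_divide_distrib)
    finally show ?thesis unfolding kk .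
  qed
  have l0': "l \<noteq> 0" using l0 by simp
  have "transpose Q ** Q = mat 1"
    unfolding mat2_eq TQ using n1 n2 n3 l0'
    by (simp add: mat_def a_def b_def c_def e_def power2_eq_square mult.commute)
  then have "orthogonal_matrix Q" by (simp add: orthogonal_matrix)
  moreover have "A = k *\<^sub>R Q" using k0 by (simp add: Q_def)
  moreover have "k \<noteq> 0" using k0 by simp
  ultimately show ?thesis unfolding special_def using A0 by blast
qed


lemma colinear_N:
  assumes d: "dt A \<noteq> 0" and N: "\<And>t::real. NN A B t = 0"
  shows "colinear_mat A B"
proof -
  define a where "a = A$1$1"
  define b where "b = A$1$2"
  define c where "c = A$2$1"
  define e where "e = A$2$2"
  define a' where "a' = B$1$1"
  define b' where "b' = B$1$2"
  define c' where "c' = B$2$1"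
  define e' where "e' = B$2$2"
  have E1: "a * b' - b * a' = 0" using N[of 0] by (simp add: NN_def sP_def sQ_def a_def b_def a'_def b'_def)
  have E2: "c * e' - e * c' = 0" using N[of "pi/2"] by (simp add: NN_def sP_def sQ_def c_def e_def c'_def e'_def)
  have h2: "(sqrt 2 / 2)^2 = (1/2::real)" by (simp add: power_divide)
  have sc: "sin (pi/4) = cos (pi/4)" by (simp add: cos_45 sin_45)
  have "NN A B (pi/4) = (cos (pi/4))^2 * ((a + c) * (b' + e') - (b + e) * (a' + c'))"
    unfolding NN_def sP_real sQ_real sc a_def b_def c_def e_def a'_def b'_def c'_def e'_def
    by algebra
  moreover have "(cos (pi/4))^2 = (sqrt 2 / 2)^2" by (simp add: cos_45)
  ultimately have "NN A B (pi/4) = (sqrt 2 / 2)^2 * ((a + c) * (b' + e') - (b + e) * (a' + c'))" by simp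
  then have "NN A B (pi/4) = ((a + c) * (b' + e') - (b + e) * (a' + c')) / 2" unfolding h2 by simp
  then have E3: "(a + c) * (b' + e') - (b + e) * (a' + c') = 0" using N[of "pi/4"] by simp
  define D where "D = a * e - b * c"
  have D0: "D \<noteq> 0" using d by (simp add: D_def dt_def a_def b_def c_def e_def)
  define k where "k = (a' * e - b' * c) / D"
  have kD: "k * D = a' * e - b' * c" using D0 by (simp add: k_def)
  have "a' * D - (a' * e - b' * c) * a = c * (a * b' - b * a')" unfolding D_def by (simp add: algebra_simps)
  then have "a' * D = k * D * a" unfolding kD using E1 E2 E3 by simp
  then have 1: "a' = k * a" using D0 by simp
  have "b' * D - (a' * e - b' * c) * b = e * (a * b' - b * a')" unfolding D_def by (simp add: algebra_simps)
  then have "b' * D = k * D * b" unfolding kD using E1 E2 E3 by simp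
  then have 2: "b' = k * b" using D0 by simp
  have "c' * D - (a' * e - b' * c) * c = c * ((a + c) * (b' + e') - (b + e) * (a' + c') - (a * b' - b * a') - (c * e' - e * c')) - a * (c * e' - e * c')" unfolding D_def by (simp add: algebra_simps)
  then have "c' * D = k * D * c" unfolding kD using E1 E2 E3 by simp
  then have 3: "c' = k * c" using D0 by simp
  have "e' * D - (a' * e - b' * c) * e = e * ((a + c) * (b' + e') - (b + e) * (a' + c') - (a * b' - b * a') - (c * e' - e * c')) - b * (c * e' - e * c')" unfolding D_def by (simp add: algebra_simps)
  then have "e' * D = k * D * e" unfolding kD using E1 E2 E3 by simp
  then have 4: "e' = k * e" using D0 by simp
  have "B = k *\<^sub>R A" unfolding mat2_eq using 1 2 3 4
    by (simp add: a_def b_def c_def e_def a'_def b'_def c'_def e'_def)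
  then show ?thesis unfolding colinear_mat_def by blast
qed


lemma rank1_factor:
  assumes A0: "A \<noteq> 0" and d: "dt A = 0"
  shows "\<exists>p1 p2 q1 q2. (p1 \<noteq> 0 \<or> p2 \<noteq> 0) \<and> (q1 \<noteq> 0 \<or> q2 \<noteq> 0) \<and>
     A$1$1 = p1 * q1 \<and> A$1$2 = p1 * q2 \<and> A$2$1 = p2 * q1 \<and> A$2$2 = p2 * q2"
proof (cases "A$1$1 = 0 \<and> A$1$2 = 0")
  case True
  then show ?thesis using A0 unfolding mat2_nz
    by (rule_tac x=0 in exI, rule_tac x=1 in exI, rule_tac x="A$2$1" in exI, rule_tac x="A$2$2" in exI) auto
next
  case False
  define l where "l = (A$1$1 * A$2$1 + A$1$2 * A$2$2) / (A$1$1^2 + A$1$2^2)"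
  have n: "A$1$1^2 + A$1$2^2 \<noteq> 0" using False by (auto simp: add_nonneg_eq_0_iff)
  have dd: "A$1$1 * A$2$2 = A$1$2 * A$2$1" using d by (simp add: dt_def)
  have ln: "l * (A$1$1^2 + A$1$2^2) = A$1$1 * A$2$1 + A$1$2 * A$2$2" using n by (simp add: l_def)
  have "(A$2$1 - l * A$1$1) * (A$1$1^2 + A$1$2^2) = 0"
    using ln dd by algebra
  then have c: "A$2$1 = l * A$1$1" using n by auto
  have "(A$2$2 - l * A$1$2) * (A$1$1^2 + A$1$2^2) = 0"
    using ln dd by algebra
  then have e: "A$2$2 = l * A$1$2" using n by auto
  show ?thesis using False c e
    by (rule_tac x=1 in exI, rule_tac x=l in exI, rule_tac x="A$1$1" in exI, rule_tac x="A$1$2" in exI) auto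
qed

lemma psiB_eq: "psi B (t, p) = B$1$1 * cos t * cos p + B$1$2 * cos t * sin p + B$2$1 * sin t * cos p + B$2$2 * sin t * sin p"
  by (rule psi_eq)

lemma rank1_case:
  assumes A0: "A \<noteq> 0" and d: "dt A = 0" and p: "(t0, f0) \<in> zero_set A" and e: "\<epsilon> > 0"
    and van: "\<And>q. q \<in> zero_set A \<Longrightarrow> dist q (t0, f0) < \<epsilon> \<Longrightarrow> F_AB A B q = 0"
  shows False
proof -
  obtain p1 p2 q1 q2 where pn: "p1 \<noteq> 0 \<or> p2 \<noteq> 0" and qn: "q1 \<noteq> 0 \<or> q2 \<noteq> 0"
    and ent: "A$1$1 = p1 * q1" "A$1$2 = p1 * q2" "A$2$1 = p2 * q1" "A$2$2 = p2 * q2"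
    using rank1_factor[OF A0 d] by blast
  define L where "L t = p1 * cos t + p2 * sin t" for t
  define L' where "L' t = - p1 * sin t + p2 * cos t" for t
  define K where "K t = q1 * cos t + q2 * sin t" for t
  define K' where "K' t = - q1 * sin t + q2 * cos t" for t
  have psiL: "psi A (t, f) = L t * K f" for t f
    unfolding psi_eq ent L_def K_def by (simp add: algebra_simps)
  have FL: "F_AB A B (t, f) = psi B (t, f) - (L' t * K f)^2 + (L t * K' f)^2" for t f
  proof -
    have "d_theta (psi A) (t, f) = L' t * K f" unfolding dtheta_eq ent L'_def K_def by (simp add: algebra_simps)
    moreover have "d_phi (psi A) (t, f) = L t * K' f" unfolding dphi_eq ent L_def K'_def by (simp add: algebra_simps)
    ultimately show ?thesis by (simp add: F_AB_def)
  qed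
  have LK: "L t0 * K f0 = 0" using p psiL by (simp add: zero_set_def)
  have pz: "p1 = L t * cos t - L' t * sin t" "p2 = L t * sin t + L' t * cos t" for t
  proof -
    have "L t * cos t - L' t * sin t = p1 * (sin t ^ 2 + cos t ^ 2)"
      "L t * sin t + L' t * cos t = p2 * (sin t ^ 2 + cos t ^ 2)"
      unfolding L_def L'_def by algebra+
    then show "p1 = L t * cos t - L' t * sin t" "p2 = L t * sin t + L' t * cos t" by simp_all
  qed
  have qz: "q1 = K t * cos t - K' t * sin t" "q2 = K t * sin t + K' t * cos t" for t
  proof -
    have "K t * cos t - K' t * sin t = q1 * (sin t ^ 2 + cos t ^ 2)"
      "K t * sin t + K' t * cos t = q2 * (sin t ^ 2 + cos t ^ 2)"
      unfolding K_def K'_def by algebra+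
    then show "q1 = K t * cos t - K' t * sin t" "q2 = K t * sin t + K' t * cos t" by simp_all
  qed
  show False
  proof (cases "L t0 = 0")
    case True
    have "(B$1$1 * cos t0 + B$2$1 * sin t0) * cos f + (B$1$2 * cos t0 + B$2$2 * sin t0) * sin f
          + (- ((L' t0)^2)) * (q1 * cos f + q2 * sin f)^2 = 0" if "\<bar>f - f0\<bar> < \<epsilon>" for f
    proof -
      have "(t0, f) \<in> zero_set A" using True psiL by (simp add: zero_set_def)
      moreover have "dist (t0, f) (t0, f0) < \<epsilon>" using that by (simp add: dist_Pair_Pair dist_real_def)
      ultimately have "F_AB A B (t0, f) = 0" by (rule van)
      then show ?thesis unfolding FL psiB_eq True K_def by (simp add: algebra_simps power2_eq_square)
    qed
    from line_lemma[OF e this] have "L' t0 = 0 \<or> (q1 = 0 \<and> q2 = 0)" by simp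
    then show False using pz[of t0] True pn qn by auto
  next
    case False
    then have K0: "K f0 = 0" using LK by simp
    have "(B$1$1 * cos f0 + B$1$2 * sin f0) * cos t + (B$2$1 * cos f0 + B$2$2 * sin f0) * sin t
          + (K' f0)^2 * (p1 * cos t + p2 * sin t)^2 = 0" if "\<bar>t - t0\<bar> < \<epsilon>" for t
    proof -
      have "(t, f0) \<in> zero_set A" using K0 psiL by (simp add: zero_set_def)
      moreover have "dist (t, f0) (t0, f0) < \<epsilon>" using that by (simp add: dist_Pair_Pair dist_real_def)
      ultimately have "F_AB A B (t, f0) = 0" by (rule van)
      then show ?thesis unfolding FL psiB_eq K0 L_def by (simp add: algebra_simps power2_eq_square)
    qed
    from line_lemma[OF e this] have "K' f0 = 0 \<or> (p1 = 0 \<and> p2 = 0)" by simp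
    then show False using qz[of f0] K0 pn qn by auto
  qed
qed

lemma s_pos:
  assumes d: "dt A \<noteq> 0"
  shows "(sP A t)^2 + (sQ A t)^2 > (0::real)"
proof -
  have "(sP A t)^2 + (sQ A t)^2 \<noteq> 0"
  proof
    assume "(sP A t)^2 + (sQ A t)^2 = 0"
    then have P: "sP A t = 0" and Q: "sQ A t = 0" by (auto simp: add_nonneg_eq_0_iff)
    have "dt A * cos t = A$2$2 * sP A t - A$2$1 * sQ A t" unfolding dt_def sP_real sQ_real by algebra
    then have c: "cos t = 0" using P Q d by simp
    have "dt A * sin t = - A$1$2 * sP A t + A$1$1 * sQ A t" unfolding dt_def sP_real sQ_real by algebra
    then have s: "sin t = 0" using P Q d by simp
    show False using c s sin_cos_squared_add[of t] by simp
  qed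
  moreover have "(sP A t)^2 + (sQ A t)^2 \<ge> (0::real)" by simp
  ultimately show ?thesis by linarith
qed

lemma inv_case:
  assumes d: "dt A \<noteq> 0" and p: "(t0, f0) \<in> zero_set A" and e: "\<epsilon> > 0"
    and van: "\<And>q. q \<in> zero_set A \<Longrightarrow> dist q (t0, f0) < \<epsilon> \<Longrightarrow> F_AB A B q = 0"
  shows "\<exists>\<delta>>0. \<forall>t. \<bar>t - t0\<bar> < \<delta> \<longrightarrow> GG A B t = (0::real)"
proof -
  define P where "P t = sP A t" for t :: real
  define Q where "Q t = sQ A t" for t :: real
  define s where "s t = P t ^ 2 + Q t ^ 2" for t
  define r where "r t = sqrt (s t)" for t
  have sp: "s t > 0" for t using s_pos[OF d] by (simp add: s_def P_def Q_def)
  have rp: "r t > 0" for t using sp by (simp add: r_def)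
  have rs: "r t ^ 2 = s t" for t using sp[of t] by (simp add: r_def)
  have psiPQ: "psi A (t, f) = cos f * P t + sin f * Q t" for t f
    unfolding psi_eq P_def Q_def sP_real sQ_real by (simp add: algebra_simps)
  have z0: "cos f0 * P t0 + sin f0 * Q t0 = 0" using p psiPQ by (simp add: zero_set_def)
  define \<sigma> where "\<sigma> = (P t0 * sin f0 - Q t0 * cos f0) / r t0"
  have "(P t0 * sin f0 - Q t0 * cos f0)^2 + (cos f0 * P t0 + sin f0 * Q t0)^2
        = (P t0 ^ 2 + Q t0 ^ 2) * (sin f0 ^ 2 + cos f0 ^ 2)" by algebra
  then have "(P t0 * sin f0 - Q t0 * cos f0)^2 = s t0" using z0 by (simp add: s_def)
  then have sg: "\<sigma>^2 = 1" using rs[of t0] sp[of t0] by (simp add: \<sigma>_def power_divide)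
  define X where "X t = - \<sigma> * Q t / r t" for t
  define Y where "Y t = \<sigma> * P t / r t" for t
  have rX: "r t * X t = - \<sigma> * Q t" for t using rp[of t] by (simp add: X_def)
  have rY: "r t * Y t = \<sigma> * P t" for t using rp[of t] by (simp add: Y_def)
  have XY: "X t ^ 2 + Y t ^ 2 = 1" for t
  proof -
    have "(r t)^2 * (X t ^ 2 + Y t ^ 2) = \<sigma>^2 * s t" using rX[of t] rY[of t] unfolding s_def by algebra
    then have "s t * (X t ^ 2 + Y t ^ 2) = s t" using sg rs by simp
    then show ?thesis using sp[of t] by simp
  qed
  have X0: "X t0 = cos f0"
  proof -
    have "r t0 * (r t0 * X t0) = r t0 * (r t0 * cos f0)"
      unfolding rX unfolding \<sigma>_def using rp[of t0] rs[of t0] z0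
      by (simp add: field_simps s_def) algebra
    then show ?thesis using rp[of t0] by simp
  qed
  have Y0: "Y t0 = sin f0"
  proof -
    have "r t0 * (r t0 * Y t0) = r t0 * (r t0 * sin f0)"
      unfolding rY unfolding \<sigma>_def using rp[of t0] rs[of t0] z0
      by (simp add: field_simps s_def) algebra
    then show ?thesis using rp[of t0] by simp
  qed
  have cX: "continuous (at t0) X" and cY: "continuous (at t0) Y"
    unfolding X_def Y_def r_def s_def P_def Q_def sP_real sQ_real
    using rp[of t0] unfolding r_def s_def P_def Q_def sP_real sQ_real
    by (auto intro!: continuous_intros)
  obtain ph where cph: "continuous (at t0) ph" and ph0: "ph t0 = f0"
    and phXY: "\<And>t. cos (ph t) = X t \<and> sin (ph t) = Y t"
    using lift[OF cX cY XY X0 Y0] by blast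
  have "continuous (at t0) (\<lambda>t. (t, ph t))" using cph by (intro continuous_intros)
  then obtain \<delta> where dp: "\<delta> > 0" and dl: "\<And>t. dist t t0 < \<delta> \<Longrightarrow> dist (t, ph t) (t0, ph t0) < \<epsilon>"
    unfolding continuous_at_eps_delta using e by blast
  have "GG A B t = 0" if "\<bar>t - t0\<bar> < \<delta>" for t
  proof -
    have "psi A (t, ph t) = 0"
    proof -
      have "r t * psi A (t, ph t) = (r t * X t) * P t + (r t * Y t) * Q t"
        unfolding psiPQ using phXY[of t] by (simp add: algebra_simps)
      also have "\<dots> = 0" unfolding rX rY by (simp add: algebra_simps)
      finally have "r t * psi A (t, ph t) = 0" .
      then show ?thesis using rp[of t] by simp
    qed
    then have "(t, ph t) \<in> zero_set A" by (simp add: zero_set_def)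
    moreover have "dist (t, ph t) (t0, f0) < \<epsilon>" using dl[of t] that ph0 by (simp add: dist_real_def)
    ultimately have F0: "F_AB A B (t, ph t) = 0" by (rule van)
    have rX': "r t * X t = - \<sigma> * (A$1$2 * cos t + A$2$2 * sin t)" using rX[of t] by (simp add: Q_def sQ_real)
    have rY': "r t * Y t = \<sigma> * (A$1$1 * cos t + A$2$1 * sin t)" using rY[of t] by (simp add: P_def sP_real)
    have r2: "r t ^ 2 = (A$1$1 * cos t + A$2$1 * sin t)^2 + (A$1$2 * cos t + A$2$2 * sin t)^2"
      using rs[of t] by (simp add: s_def P_def Q_def sP_real sQ_real)
    have F0': "(B$1$1 * cos t * X t + B$1$2 * cos t * Y t + B$2$1 * sin t * X t + B$2$2 * sin t * Y t)
            - (- A$1$1 * sin t * X t - A$1$2 * sin t * Y t + A$2$1 * cos t * X t + A$2$2 * cos t * Y t)^2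
            + (- A$1$1 * cos t * Y t + A$1$2 * cos t * X t - A$2$1 * sin t * Y t + A$2$2 * sin t * X t)^2 = 0"
      using F0 phXY[of t] by (simp add: F_AB_def psi_eq dtheta_eq dphi_eq)
    have "((A$1$1 * cos t + A$2$1 * sin t)^2 + (A$1$2 * cos t + A$2$2 * sin t)^2) *
          ((A$1$1 * cos t + A$2$1 * sin t) * (B$1$2 * cos t + B$2$2 * sin t) - (A$1$2 * cos t + A$2$2 * sin t) * (B$1$1 * cos t + B$2$1 * sin t))^2
       - (((A$1$1 * cos t + A$2$1 * sin t)^2 + (A$1$2 * cos t + A$2$2 * sin t)^2)^2 - (A$1$1 * A$2$2 - A$1$2 * A$2$1)^2)^2 = 0"
      by (rule alg_inv[OF sin_cos_squared_add2[of t] r2 sg rX' rY' F0'])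
    then show ?thesis by (simp add: GG_def ss_def NN_def sP_real sQ_real dt_def mult.commute)
  qed
  then show ?thesis using dp by blast
qed

lemma F_expl: "F_AB A B q =
   (B$1$1 * cos (fst q) * cos (snd q) + B$1$2 * cos (fst q) * sin (snd q) + B$2$1 * sin (fst q) * cos (snd q) + B$2$2 * sin (fst q) * sin (snd q))
 - (- A$1$1 * sin (fst q) * cos (snd q) - A$1$2 * sin (fst q) * sin (snd q) + A$2$1 * cos (fst q) * cos (snd q) + A$2$2 * cos (fst q) * sin (snd q))^2
 + (- A$1$1 * cos (fst q) * sin (snd q) + A$1$2 * cos (fst q) * cos (snd q) - A$2$1 * sin (fst q) * sin (snd q) + A$2$2 * sin (fst q) * cos (snd q))^2"
  by (cases q) (simp add: F_AB_def psi_eq dtheta_eq dphi_eq)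

lemma F_cont: "continuous_on UNIV (F_AB A B)"
  unfolding F_expl[abs_def] by (intro continuous_intros)

lemma main:
  assumes A0: "A \<noteq> 0" and H: "special A \<Longrightarrow> \<not> colinear_mat A B"
  shows "nonvanishing_open_dense (F_AB A B) (zero_set A)"
proof -
  define U where "U = zero_set A \<inter> {q. F_AB A B q \<noteq> 0}"
  have "open {q. F_AB A B q \<noteq> 0}" by (rule open_Collect_neq[OF F_cont continuous_on_const])
  then have op: "openin (top_of_set (zero_set A)) U" unfolding U_def by (rule openin_open_Int)
  have "q \<in> closure U" if q: "q \<in> zero_set A" for q
  proof (rule ccontr)
    assume "q \<notin> closure U"
    then obtain \<epsilon> where e: "\<epsilon> > 0" and far: "\<And>y. y \<in> U \<Longrightarrow> \<not> dist y q < \<epsilon>"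
      unfolding closure_approachable by auto
    obtain t0 f0 where q0: "q = (t0, f0)" by (cases q)
    have van: "F_AB A B y = 0" if "y \<in> zero_set A" "dist y (t0, f0) < \<epsilon>" for y
      using far[of y] that q0 unfolding U_def by auto
    have p: "(t0, f0) \<in> zero_set A" using q q0 by simp
    show False
    proof (cases "dt A = 0")
      case True
      show False by (rule rank1_case[OF A0 True p e van])
    next
      case False
      obtain \<delta> where dp: "\<delta> > 0" and G0: "\<And>t. \<bar>t - t0\<bar> < \<delta> \<Longrightarrow> GG A B t = (0::real)"
        using inv_case[OF False p e van] by blast
      define m11 where "m11 = A$1$1^2 + A$1$2^2"
      define m22 where "m22 = A$2$1^2 + A$2$2^2"
      define m12 where "m12 = A$1$1 * A$2$1 + A$1$2 * A$2$2"
      have ssf: "ss A z = of_real m11 * cos z ^ 2 + 2 * of_real m12 * cos z * sin z + of_real m22 * sin z ^ 2"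
        for z :: "'a::{real_normed_field,banach}"
        unfolding ss_def sP_def sQ_def m11_def m12_def m22_def by (simp add: algebra_simps power2_eq_square)
      show False
      proof (cases "special A")
        case True
        from special_props[OF True] have sp: "m11 = m22" "m12 = 0" "dt A ^ 2 = m11 ^ 2"
          unfolding m11_def m12_def m22_def by auto
        have Gall: "GG A B t = (0::real)" for t
          by (rule real_ident[OF GG_hol GG_of_real dp G0])
        have m0: "m11 \<noteq> 0" using sp(3) False by auto
        have "NN A B t = (0::real)" for t
        proof -
          have "ss A t = m11" unfolding ssf sp(1,2) 
            by (simp add: algebra_simps flip: distrib_left)
          then have "m11 * NN A B t ^ 2 = 0" using Gall[of t] sp(3) by (simp add: GG_def)
          then show ?thesis using m0 by simp
        qed
        then have "colinear_mat A B" by (rule colinear_N[OF False])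
        then show False using H True by blast
      next
        case False2: False
        have ns: "\<not> (m11 = m22 \<and> m12 = 0)"
          using nonspecial[OF A0] False2 unfolding m11_def m12_def m22_def by blast
        have m0: "m11 \<noteq> 0"
        proof
          assume "m11 = 0"
          then have "A$1$1 = 0" "A$1$2 = 0" unfolding m11_def by (auto simp: add_nonneg_eq_0_iff)
          then show False using False by (simp add: dt_def)
        qed
        obtain z :: complex where z: "of_real m11 * cos z ^ 2 + 2 * of_real m12 * cos z * sin z + of_real m22 * sin z ^ 2 = 0"
          using cplx_zero[OF m0 ns] by blast
        have "GG A B z = 0"
          by (rule ident[OF GG_hol dp, where xc=t0]) (simp add: GG_of_real G0)
        moreover have "GG A B z = - ((of_real (dt A ^ 2))^2)" unfolding GG_def ssf z by simp
        ultimately show False using False by simp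
      qed
    qed
  qed
  then have "zero_set A \<subseteq> closure U" by blast
  moreover have "\<forall>p\<in>U. F_AB A B p \<noteq> 0" unfolding U_def by blast
  ultimately show ?thesis unfolding nonvanishing_open_dense_def using op by blast
qed

theorem lemma2p6:
  fixes A B :: "real^2^2"
  shows "(A \<noteq> 0 \<and> \<not> special A \<longrightarrow> nonvanishing_open_dense (F_AB A B) (zero_set A))
       \<and> (A \<noteq> 0 \<and> special A \<and> B \<noteq> 0 \<and> \<not> colinear_mat A B
            \<longrightarrow> nonvanishing_open_dense (F_AB A B) (zero_set A))"
  using main by blast

end
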